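(* Let $b>0$, $L\in\mathbb{R}$, and let $f:[L,\infty)\to\mathbb{R}$ be twice differentiable and a tempered distribution on $[L,\infty)$ (i.e., $\int_L^\infty|f(x)s(x)|dx<\infty$ for all $s\in S(\mathbb{R})$). Let $\mu$ be a probability measure on $[L,\infty)$ such that $\int_L^\infty |f(q)|e^{(L-q)/b}d\mu(q)<\infty$. For $w:(-\infty,L]\to\mathbb{R}$ let $\tilde f[w]:\mathbb{R}\to\mathbb{R}$ be $\tilde f[w](x)=f(x)$ for $x\ge L$ and $\tilde f[w](x)=w(x)$ for $x<L$. Let $h:(-\infty,L]\to\mathbb{R}$ be twice continuously differentiable with $h,h',h''$ each bounded in absolute value by a polynomial on $(-\infty,L]$, and with $h(L)=f(L)$, $h'(L)=f'(L)$, $h''(L)=f''(L)$. Let $g=\tilde f[h]-b^2\tilde f[h]''$ and $$\alpha=\int_{-\infty}^{\infty}\int_{[L,\infty)}\big(g(x)-f(q)\big)^2\frac{1}{2b}e^{-|x-q|/b}\,d\mu(q)\,dx .$$ Then there exists a sequence of polynomials $(p_K)_{K\ge1}$ on $(-\infty,L]$ with $p_K(L)=f(L)$, $p_K'(L)=f'(L)$, $p_K''(L)=f''(L)$, such that the estimators $g_K=\tilde f[p_K]-b^2\tilde f[p_K]''$ satisfy $$\lim_{K\to\infty}\int_{-\infty}^{\infty}\int_{[L,\infty)}\big(g_K(x)-f(q)\big)^2\frac{1}{2b}e^{-|x-q|/b}\,d\mu(q)\,dx=\alpha .$$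
   Context: The Schwartz space $S(\mathbb{R})$ is the set of $C^\infty$ functions $s:\mathbb{R}\to\mathbb{C}$ with $\sup_x|x^m s^{(n)}(x)|<\infty$ for all integers $m,n\ge0$. Derivatives of $\tilde f[w]$ at $x=L$ are well defined because the values and first two derivatives of $f$ and $w$ match at $L$; the value at the single point $L$ does not affect the integrals. *)

theory Defs
  imports "HOL-Analysis.Analysis" "HOL-Probability.Probability"
    "HOL-Computational_Algebra.Polynomial"
begin

definition schwartz :: "(real \<Rightarrow> complex) \<Rightarrow> bool" where
  "schwartz s \<longleftrightarrow> (\<exists>D :: nat \<Rightarrow> real \<Rightarrow> complex.
      D 0 = s \<and>
      (\<forall>n x. (D n has_vector_derivative D (Suc n) x) (at x)) \<and>
      (\<forall>m n. \<exists>C. \<forall>x. norm (complex_of_real (x ^ m) * D n x) \<le> C))"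

definition poly_bounded_on :: "real set \<Rightarrow> (real \<Rightarrow> real) \<Rightarrow> bool" where
  "poly_bounded_on A u \<longleftrightarrow> (\<exists>P :: real poly. \<forall>x\<in>A. \<bar>u x\<bar> \<le> poly P x)"

text \<open>The loss functional
  int_R int_[L,inf) (g x - f q)^2 (1/(2b)) exp(-|x-q|/b) dmu(q) dx,
  as an extended nonnegative real (integrand is nonnegative).\<close>
definition kernel_loss ::
  "real measure \<Rightarrow> real \<Rightarrow> real \<Rightarrow> (real \<Rightarrow> real) \<Rightarrow> (real \<Rightarrow> real) \<Rightarrow> ennreal" where
  "kernel_loss \<mu> L b f g =
     (\<integral>\<^sup>+ x. (\<integral>\<^sup>+ q. ennreal ((g x - f q)^2 * (1 / (2*b)) * exp (- \<bar>x - q\<bar> / b))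
                       * indicator {L..} q \<partial>\<mu>) \<partial>lborel)"

end

theory Submission
  imports Defs "HOL-Real_Asymp.Real_Asymp"
begin


definition wapprox :: "real \<Rightarrow> real \<Rightarrow> (real \<Rightarrow> real) \<Rightarrow> bool" where
  "wapprox c L \<phi> \<longleftrightarrow> (\<forall>\<delta>>0. \<exists>P::real poly. \<forall>x\<le>L. \<bar>\<phi> x - poly P x\<bar> \<le> \<delta> * exp (c*(L-x)))"

lemma abs_add_le2: "\<bar>u\<bar> \<le> a \<Longrightarrow> \<bar>v\<bar> \<le> b \<Longrightarrow> \<bar>u + v\<bar> \<le> a + (b::real)"
  using abs_triangle_ineq[of u v] by linarith

lemma wapprox_poly: "wapprox c L (poly P)"
  unfolding wapprox_def by (auto intro!: exI[of _ P] mult_nonneg_nonneg less_imp_le)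

lemma wapprox_add:
  assumes "wapprox c L \<phi>" "wapprox c L \<psi>"
  shows "wapprox c L (\<lambda>x. \<phi> x + \<psi> x)"
  unfolding wapprox_def
proof (intro allI impI)
  fix \<delta> :: real assume d: "\<delta> > 0"
  obtain P where P: "\<forall>x\<le>L. \<bar>\<phi> x - poly P x\<bar> \<le> \<delta>/2 * exp (c*(L-x))"
    using assms(1) d unfolding wapprox_def by (meson half_gt_zero)
  obtain Q where Q: "\<forall>x\<le>L. \<bar>\<psi> x - poly Q x\<bar> \<le> \<delta>/2 * exp (c*(L-x))"
    using assms(2) d unfolding wapprox_def by (meson half_gt_zero)
  show "\<exists>P. \<forall>x\<le>L. \<bar>\<phi> x + \<psi> x - poly P x\<bar> \<le> \<delta> * exp (c * (L - x))"
  proof (intro exI[of _ "P+Q"] allI impI)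
    fix x assume "x \<le> L"
    with P Q have "\<bar>\<phi> x - poly P x\<bar> \<le> \<delta>/2 * exp (c*(L-x))" "\<bar>\<psi> x - poly Q x\<bar> \<le> \<delta>/2 * exp (c*(L-x))" by auto
    then have "\<bar>(\<phi> x - poly P x) + (\<psi> x - poly Q x)\<bar> \<le> \<delta>/2 * exp (c*(L-x)) + \<delta>/2 * exp (c*(L-x))"
      by (rule abs_add_le2)
    then show "\<bar>\<phi> x + \<psi> x - poly (P+Q) x\<bar> \<le> \<delta> * exp (c * (L - x))" by (simp add: algebra_simps)
  qed
qed

lemma wapprox_cmult:
  assumes "wapprox c L \<phi>"
  shows "wapprox c L (\<lambda>x. a * \<phi> x)"
  unfolding wapprox_def
proof (intro allI impI)
  fix \<delta> :: real assume d: "\<delta> > 0"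
  have "\<delta> / (\<bar>a\<bar>+1) > 0" using d by simp
  then obtain P where P: "\<forall>x\<le>L. \<bar>\<phi> x - poly P x\<bar> \<le> \<delta>/(\<bar>a\<bar>+1) * exp (c*(L-x))"
    using assms(1) unfolding wapprox_def by blast
  show "\<exists>P. \<forall>x\<le>L. \<bar>a * \<phi> x - poly P x\<bar> \<le> \<delta> * exp (c * (L - x))"
  proof (intro exI[of _ "smult a P"] allI impI)
    fix x assume "x \<le> L"
    with P have 1: "\<bar>\<phi> x - poly P x\<bar> \<le> \<delta>/(\<bar>a\<bar>+1) * exp (c*(L-x))" by auto
    have "\<bar>a * \<phi> x - poly (smult a P) x\<bar> = \<bar>a\<bar> * \<bar>\<phi> x - poly P x\<bar>"
      by (simp add: abs_mult[symmetric] right_diff_distrib)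
    also have "\<dots> \<le> (\<bar>a\<bar>+1) * (\<delta>/(\<bar>a\<bar>+1) * exp (c*(L-x)))"
      using 1 by (intro mult_mono) auto
    also have "\<dots> = \<delta> * exp (c * (L - x))" by simp
    finally show "\<bar>a * \<phi> x - poly (smult a P) x\<bar> \<le> \<delta> * exp (c * (L - x))" .
  qed
qed

lemma wapprox_sum:
  assumes "finite A" "\<And>i. i \<in> A \<Longrightarrow> wapprox c L (\<phi> i)"
  shows "wapprox c L (\<lambda>x. \<Sum>i\<in>A. \<phi> i x)"
  using assms
proof (induction A rule: finite_induct)
  case empty
  have "poly 0 = (\<lambda>x::real. 0)" by (rule ext) simp
  then show ?case using wapprox_poly[of c L 0] by simp
next
  case (insert a A)
  then show ?case by (simp add: wapprox_add)
qed

lemma wapprox_closure: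
  assumes "\<And>\<delta>. \<delta> > 0 \<Longrightarrow> \<exists>\<psi>. wapprox c L \<psi> \<and> (\<forall>x\<le>L. \<bar>\<phi> x - \<psi> x\<bar> \<le> \<delta> * exp (c*(L-x)))"
  shows "wapprox c L \<phi>"
  unfolding wapprox_def
proof (intro allI impI)
  fix \<delta> :: real assume d: "\<delta> > 0"
  obtain \<psi> where \<psi>: "wapprox c L \<psi>" "\<forall>x\<le>L. \<bar>\<phi> x - \<psi> x\<bar> \<le> \<delta>/2 * exp (c*(L-x))"
    using assms[of "\<delta>/2"] d by auto
  obtain P where P: "\<forall>x\<le>L. \<bar>\<psi> x - poly P x\<bar> \<le> \<delta>/2 * exp (c*(L-x))"
    using \<psi>(1) d unfolding wapprox_def by (meson half_gt_zero)
  show "\<exists>P. \<forall>x\<le>L. \<bar>\<phi> x - poly P x\<bar> \<le> \<delta> * exp (c * (L - x))"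
  proof (intro exI[of _ P] allI impI)
    fix x assume "x \<le> L"
    with P \<psi> have "\<bar>\<phi> x - \<psi> x\<bar> \<le> \<delta>/2 * exp (c*(L-x))" "\<bar>\<psi> x - poly P x\<bar> \<le> \<delta>/2 * exp (c*(L-x))" by auto
    then have "\<bar>(\<phi> x - \<psi> x) + (\<psi> x - poly P x)\<bar> \<le> \<delta>/2 * exp (c*(L-x)) + \<delta>/2 * exp (c*(L-x))"
      by (rule abs_add_le2)
    then show "\<bar>\<phi> x - poly P x\<bar> \<le> \<delta> * exp (c * (L - x))" by (simp add: algebra_simps)
  qed
qed

lemma lin_exp_bound:
  fixes \<rho> x L :: real
  assumes "\<rho> > 0" "x \<le> L"
  shows "\<bar>x\<bar> \<le> (\<bar>L\<bar> + 1/\<rho>) * exp (\<rho>*(L-x))"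
proof -
  have "\<rho>*(L-x) \<le> exp (\<rho>*(L-x))" using exp_ge_add_one_self[of "\<rho>*(L-x)"] by linarith
  then have "L - x \<le> exp (\<rho>*(L-x)) / \<rho>" using assms by (simp add: field_simps)
  moreover have "1 \<le> exp (\<rho>*(L-x))" using assms by simp
  moreover have "\<bar>L\<bar> \<le> \<bar>L\<bar> * exp (\<rho>*(L-x))"
    using \<open>1 \<le> exp (\<rho>*(L-x))\<close> by (simp add: mult_le_cancel_left1)
  ultimately have "\<bar>x\<bar> \<le> \<bar>L\<bar> * exp (\<rho>*(L-x)) + exp (\<rho>*(L-x)) / \<rho>"
    using assms by linarith
  then show ?thesis by (simp add: algebra_simps)
qed

lemma poly_exp_bound:
  fixes Q :: "real poly"
  shows "\<rho> > 0 \<Longrightarrow> \<exists>C>0. \<forall>x\<le>L. \<bar>poly Q x\<bar> \<le> C * exp (\<rho>*(L-x))"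
proof (induction Q arbitrary: \<rho>)
  case (pCons a Q)
  then obtain C where C: "C > 0" "\<forall>x\<le>L. \<bar>poly Q x\<bar> \<le> C * exp (\<rho>/2*(L-x))"
    by (meson half_gt_zero)
  define D where "D = \<bar>L\<bar> + 2/\<rho>"
  have Dp: "D > 0" using pCons.prems by (simp add: D_def add_nonneg_pos)
  show ?case
  proof (intro exI[of _ "\<bar>a\<bar> + D*C"] conjI allI impI)
    show "\<bar>a\<bar> + D*C > 0" using Dp C by (simp add: add_nonneg_pos)
    fix x assume x: "x \<le> L"
    have e1: "1 \<le> exp (\<rho>*(L-x))" using x pCons.prems by simp
    have xb: "\<bar>x\<bar> \<le> D * exp (\<rho>/2*(L-x))"
      using lin_exp_bound[of "\<rho>/2" x L] x pCons.prems by (simp add: D_def)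
    have "\<bar>x * poly Q x\<bar> \<le> (D * exp (\<rho>/2*(L-x))) * (C * exp (\<rho>/2*(L-x)))"
      unfolding abs_mult using xb C x by (intro mult_mono) auto
    also have "\<dots> = D*C * exp (\<rho>*(L-x))"
    proof -
      have "exp (\<rho>/2*(L-x)) * exp (\<rho>/2*(L-x)) = exp (\<rho>*(L-x))"
        unfolding exp_add[symmetric] by (simp add: field_simps)
      then show ?thesis by (simp add: algebra_simps)
    qed
    finally have "\<bar>x * poly Q x\<bar> \<le> D*C * exp (\<rho>*(L-x))" .
    moreover have "\<bar>a\<bar> \<le> \<bar>a\<bar> * exp (\<rho>*(L-x))" using e1 by (simp add: mult_le_cancel_left1)
    ultimately show "\<bar>poly (pCons a Q) x\<bar> \<le> (\<bar>a\<bar> + D*C) * exp (\<rho>*(L-x))"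
      using abs_add_le2[of a "\<bar>a\<bar> * exp (\<rho>*(L-x))" "x * poly Q x" "D*C * exp (\<rho>*(L-x))"]
      by (simp add: distrib_right)
  qed
qed (auto intro!: exI[of _ 1])

lemma pow_fact_le_exp:
  fixes y :: real
  assumes "0 \<le> y"
  shows "y^N / fact N \<le> exp y"
proof -
  obtain t where t: "\<bar>t\<bar> \<le> \<bar>y\<bar>" "exp y = (\<Sum>m<Suc N. y^m / fact m) + exp t / fact (Suc N) * y^(Suc N)"
    using Maclaurin_exp_le[of y "Suc N"] by blast
  have "0 \<le> (\<Sum>m<N. y^m / fact m)" using assms by (intro sum_nonneg) auto
  moreover have "0 \<le> exp t / fact (Suc N) * y^(Suc N)" using assms by simp
  ultimately show ?thesis using t(2) by simp
qed

lemma exp_taylor_err: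
  fixes y :: real
  shows "\<bar>exp y - (\<Sum>m<N. y^m / fact m)\<bar> \<le> \<bar>y\<bar>^N / fact N * exp \<bar>y\<bar>"
proof -
  obtain t where t: "\<bar>t\<bar> \<le> \<bar>y\<bar>" "exp y = (\<Sum>m<N. y^m / fact m) + exp t / fact N * y^N"
    using Maclaurin_exp_le[of y N] by blast
  have "\<bar>exp y - (\<Sum>m<N. y^m / fact m)\<bar> = exp t / fact N * \<bar>y\<bar>^N"
    using t(2) by (simp add: abs_mult power_abs)
  also have "\<dots> \<le> exp \<bar>y\<bar> / fact N * \<bar>y\<bar>^N"
    using t(1) by (intro mult_right_mono divide_right_mono) auto
  finally show ?thesis by (simp add: mult_ac)
qed

definition tpoly :: "real \<Rightarrow> real \<Rightarrow> nat \<Rightarrow> real poly" where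
  "tpoly \<mu> L N = (\<Sum>m<N. smult (\<mu>^m / fact m) ([:-L,1:]^m))"

lemma poly_tpoly: "poly (tpoly \<mu> L N) x = (\<Sum>m<N. (\<mu>*(x-L))^m / fact m)"
  by (simp add: tpoly_def poly_sum power_mult_distrib)

lemma wapprox_step:
  assumes c: "c > 0" and l0: "la \<ge> 0"
    and IH: "\<And>Q. wapprox c L (\<lambda>x. poly Q x * exp (la*(x-L)))"
    and mu: "\<bar>\<mu>\<bar> \<le> c/4"
  shows "wapprox c L (\<lambda>x. poly Q x * exp ((la+\<mu>)*(x-L)))"
  unfolding wapprox_def
proof (intro allI impI)
  fix \<delta> :: real assume d: "\<delta> > 0"
  obtain C where C: "C > 0" "\<forall>x\<le>L. \<bar>poly Q x\<bar> \<le> C * exp (c/4*(L-x))"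
    using poly_exp_bound[where \<rho>="c/4" and Q=Q and L=L] c by auto
  obtain N where N: "(1/2::real)^N < \<delta>/(2*C)"
    using real_arch_pow_inv[of "\<delta>/(2*C)" "1/2"] d C by auto
  define T where "T = tpoly \<mu> L N"
  obtain P where P: "\<forall>x\<le>L. \<bar>poly (Q*T) x * exp (la*(x-L)) - poly P x\<bar> \<le> \<delta>/2 * exp (c*(L-x))"
    using IH[of "Q*T"] d unfolding wapprox_def by (meson half_gt_zero)
  show "\<exists>P. \<forall>x\<le>L. \<bar>poly Q x * exp ((la+\<mu>)*(x-L)) - poly P x\<bar> \<le> \<delta> * exp (c * (L - x))"
  proof (intro exI[of _ P] allI impI)
    fix x assume x: "x \<le> L"
    define t where "t = L - x"
    have t0: "t \<ge> 0" using x by (simp add: t_def)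
    define y where "y = \<mu>*(x-L)"
    have ay: "\<bar>y\<bar> = \<bar>\<mu>\<bar> * t" using x by (simp add: y_def t_def abs_mult)
    have ayb: "\<bar>y\<bar> \<le> c/4 * t" unfolding ay using mu t0 by (rule mult_right_mono)
    have e0: "exp (la*(x-L)) \<le> 1" using l0 x by (simp add: mult_nonneg_nonpos)
    have "\<bar>y\<bar>^N / fact N \<le> ((1/2) * (c/2*t))^N / fact N"
      using ayb by (intro divide_right_mono power_mono) auto
    also have "\<dots> = (1/2)^N * ((c/2*t)^N / fact N)" by (simp only: power_mult_distrib) simp
    also have "\<dots> \<le> (1/2)^N * exp (c/2*t)"
      using pow_fact_le_exp[of "c/2*t" N] c t0 by (intro mult_left_mono) auto
    finally have yN: "\<bar>y\<bar>^N / fact N \<le> (1/2)^N * exp (c/2*t)" .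
    have err: "\<bar>exp y - poly T x\<bar> \<le> (1/2)^N * exp (c/2*t) * exp (c/4*t)"
    proof -
      have "\<bar>exp y - poly T x\<bar> \<le> \<bar>y\<bar>^N / fact N * exp \<bar>y\<bar>"
        using exp_taylor_err[of y N] by (simp add: T_def poly_tpoly y_def)
      also have "\<dots> \<le> (1/2)^N * exp (c/2*t) * exp (c/4*t)"
        using yN ayb by (intro mult_mono) auto
      finally show ?thesis .
    qed
    have "\<bar>poly Q x * exp (la*(x-L)) * (exp y - poly T x)\<bar>
          \<le> (C * exp (c/4*t)) * 1 * ((1/2)^N * exp (c/2*t) * exp (c/4*t))"
      unfolding abs_mult using C(2) x e0 err by (intro mult_mono) (auto simp: t_def)
    also have "\<dots> = C * (1/2)^N * exp (c*t)"
      unfolding exp_add[symmetric] mult.assoc[symmetric]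
      by (simp add: algebra_simps exp_add[symmetric])
    also have "\<dots> \<le> \<delta>/2 * exp (c*t)"
    proof -
      have "C * (1/2)^N \<le> \<delta>/2" using N C(1) by (simp add: field_simps)
      then show ?thesis by (intro mult_right_mono) auto
    qed
    finally have A: "\<bar>poly Q x * exp (la*(x-L)) * (exp y - poly T x)\<bar> \<le> \<delta>/2 * exp (c*(L-x))"
      by (simp add: t_def)
    have B: "\<bar>poly (Q*T) x * exp (la*(x-L)) - poly P x\<bar> \<le> \<delta>/2 * exp (c*(L-x))" using P x by auto
    have eq: "poly Q x * exp ((la+\<mu>)*(x-L)) - poly P x
       = poly Q x * exp (la*(x-L)) * (exp y - poly T x) + (poly (Q*T) x * exp (la*(x-L)) - poly P x)"
      by (simp add: y_def algebra_simps exp_add[symmetric])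
    show "\<bar>poly Q x * exp ((la+\<mu>)*(x-L)) - poly P x\<bar> \<le> \<delta> * exp (c * (L - x))"
      using abs_add_le2[OF A B] unfolding eq by simp
  qed
qed

lemma wapprox_exp_nat:
  assumes c: "c > 0"
  shows "\<forall>la. 0 \<le> la \<and> la \<le> real k * (c/4) \<longrightarrow> (\<forall>Q. wapprox c L (\<lambda>x. poly Q x * exp (la*(x-L))))"
proof (induction k)
  case 0
  show ?case by (auto simp: wapprox_poly)
next
  case (Suc k)
  show ?case
  proof (intro allI impI)
    fix la Q assume la: "0 \<le> la \<and> la \<le> real (Suc k) * (c/4)"
    define l0 where "l0 = max 0 (la - c/4)"
    have l0: "0 \<le> l0" "l0 \<le> real k * (c/4)" using la by (auto simp: l0_def max_def field_simps)
    have mu: "\<bar>la - l0\<bar> \<le> c/4" using la c by (auto simp: l0_def max_def)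
    have "wapprox c L (\<lambda>x. poly Q x * exp ((l0 + (la - l0))*(x-L)))"
      using Suc.IH l0 mu c by (intro wapprox_step) auto
    then show "wapprox c L (\<lambda>x. poly Q x * exp (la*(x-L)))" by simp
  qed
qed

lemma wapprox_exp:
  assumes c: "c > 0" and la: "la \<ge> -c/4"
  shows "wapprox c L (\<lambda>x. poly Q x * exp (la*(x-L)))"
proof -
  define l0 where "l0 = max 0 (la - c/4)"
  define k where "k = nat \<lceil>l0 / (c/4)\<rceil>"
  have "l0 / (c/4) \<le> real k" unfolding k_def by linarith
  then have l0: "0 \<le> l0" "l0 \<le> real k * (c/4)" using c by (auto simp: l0_def field_simps)
  have mu: "\<bar>la - l0\<bar> \<le> c/4" using la c by (auto simp: l0_def max_def)
  have "wapprox c L (\<lambda>x. poly Q x * exp ((l0 + (la - l0))*(x-L)))"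
    using wapprox_exp_nat[OF c, of k L] l0 mu c by (intro wapprox_step) auto
  then show ?thesis by simp
qed

lemma wapprox_cont:
  fixes \<phi> :: "real \<Rightarrow> real"
  assumes c: "c > 0" and cont: "continuous_on {..L} \<phi>"
    and bd: "\<And>x. x \<le> L \<Longrightarrow> \<bar>\<phi> x\<bar> \<le> C * exp (c/8*(L-x))"
  shows "wapprox c L \<phi>"
proof (rule wapprox_closure)
  fix \<delta> :: real assume d: "\<delta> > 0"
  define \<psi> where "\<psi> s = (if s \<le> 0 then 0 else \<phi> (L + ln s) * exp (c/4 * ln s))" for s
  have c1: "continuous_on {0<..1} \<psi>"
  proof -
    have "continuous_on {0<..1} (\<lambda>s. \<phi> (L + ln s) * exp (c/4 * ln s))"
    proof -
      have c\<phi>: "continuous_on {0<..1::real} (\<lambda>s. \<phi> (L + ln s))"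
        by (rule continuous_on_compose2[OF cont]) (auto intro!: continuous_intros)
      show ?thesis by (intro continuous_intros c\<phi>) auto
    qed
    then show ?thesis by (rule continuous_on_eq) (auto simp: \<psi>_def)
  qed
  have bdpsi: "\<bar>\<psi> s\<bar> \<le> C * s powr (c/8)" if "0 \<le> s" "s \<le> 1" for s
  proof (cases "s = 0")
    case True then show ?thesis by (simp add: \<psi>_def)
  next
    case False
    then have s: "0 < s" using that by simp
    have "L + ln s \<le> L" using that s by simp
    then have "\<bar>\<phi> (L + ln s)\<bar> \<le> C * exp (c/8*(-ln s))" using bd[of "L + ln s"] by simp
    then have "\<bar>\<psi> s\<bar> \<le> C * exp (c/8*(-ln s)) * exp (c/4 * ln s)"
      using s by (simp add: \<psi>_def abs_mult)
    also have "\<dots> = C * exp (c/8 * ln s)" by (simp add: mult.assoc exp_add[symmetric] field_simps)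
    also have "\<dots> = C * s powr (c/8)" using s by (simp add: powr_def)
    finally show ?thesis .
  qed
  have cont\<psi>: "continuous_on {0..1} \<psi>"
    unfolding continuous_on_eq_continuous_within
  proof
    fix s :: real assume s: "s \<in> {0..1}"
    show "continuous (at s within {0..1}) \<psi>"
    proof (cases "s = 0")
      case True
      have "(\<psi> \<longlongrightarrow> 0) (at 0 within {0..1})"
      proof (rule Lim_null_comparison)
        show "\<forall>\<^sub>F x in at 0 within {0..1}. norm (\<psi> x) \<le> C * x powr (c/8)"
          using bdpsi by (auto simp: eventually_at_filter)
        have "((\<lambda>x::real. x powr (c/8)) \<longlongrightarrow> 0) (at 0 within {0..1})"
          using c by (intro tendsto_zero_powrI[where b="c/8"] tendsto_intros) (auto simp: eventually_at_filter)
        then show "((\<lambda>x. C * x powr (c/8)) \<longlongrightarrow> 0) (at 0 within {0..1})"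
          using tendsto_mult_left[of _ 0 _ C] by fastforce
      qed
      then show ?thesis using True by (simp add: continuous_within \<psi>_def)
    next
      case False
      then have s0: "0 < s" using s by simp
      have "continuous (at s within {0<..1}) \<psi>"
        using c1 s s0 by (simp add: continuous_on_eq_continuous_within)
      moreover have "at s within {0..1} = at s within {0<..1}"
        by (rule at_within_nhd[of s "{0<..}"]) (use s0 in auto)
      ultimately show ?thesis by simp
    qed
  qed
  obtain g where g: "polynomial_function g" "\<forall>s\<in>{0..1}. norm (\<psi> s - g s) < \<delta>"
    using Stone_Weierstrass_polynomial_function[OF compact_Icc cont\<psi> d] by blast
  obtain a n where an: "g = (\<lambda>s. \<Sum>i\<le>n. a i * s^i)"
    using g(1) real_polynomial_function_iff_sum real_polynomial_function_eq by metis
  define \<Psi> where "\<Psi> x = (\<Sum>i\<le>n. a i * (poly [:1:] x * exp ((real i - c/4) * (x - L))))" for x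
  show "\<exists>\<psi>. wapprox c L \<psi> \<and> (\<forall>x\<le>L. \<bar>\<phi> x - \<psi> x\<bar> \<le> \<delta> * exp (c * (L - x)))"
  proof (intro exI[of _ \<Psi>] conjI allI impI)
    show "wapprox c L \<Psi>" unfolding \<Psi>_def
      using c by (intro wapprox_sum wapprox_cmult wapprox_exp) auto
    fix x assume x: "x \<le> L"
    define s where "s = exp (x - L)"
    have s: "0 < s" "s \<le> 1" using x by (auto simp: s_def)
    have ls: "ln s = x - L" by (simp add: s_def)
    have "\<bar>\<psi> s - g s\<bar> < \<delta>" using g(2) s by auto
    moreover have "\<psi> s = \<phi> x * exp (c/4 * (x - L))" using s ls by (simp add: \<psi>_def)
    moreover have "g s = \<Psi> x * exp (c/4 * (x - L))"
      unfolding an \<Psi>_def sum_distrib_right s_def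
    proof (intro sum.cong refl)
      fix i assume "i \<in> {..n}"
      have "exp (x-L)^i = exp ((real i - c/4)*(x-L)) * exp (c/4*(x-L))"
        by (simp add: exp_of_nat_mult[symmetric] exp_add[symmetric] algebra_simps)
      then show "a i * exp (x - L) ^ i = a i * (poly [:1:] x * exp ((real i - c / 4) * (x - L))) * exp (c / 4 * (x - L))"
        by simp
    qed
    ultimately have "\<bar>\<phi> x - \<Psi> x\<bar> * exp (c/4 * (x - L)) < \<delta>"
      by (simp add: abs_mult left_diff_distrib[symmetric])
    then have B: "\<bar>\<phi> x - \<Psi> x\<bar> * exp (c/4 * (x - L)) * exp (c/4 * (L - x)) < \<delta> * exp (c/4 * (L - x))"
      by (intro mult_strict_right_mono) auto
    have E: "exp (c/4 * (x - L)) * exp (c/4 * (L - x)) = 1"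
      unfolding exp_add[symmetric] by (simp add: field_simps)
    from B have "\<bar>\<phi> x - \<Psi> x\<bar> < \<delta> * exp (c/4 * (L - x))"
      by (simp only: mult.assoc E mult_1_right)
    also have "\<dots> \<le> \<delta> * exp (c * (L - x))" using d c x by (intro mult_left_mono) auto
    finally show "\<bar>\<phi> x - \<Psi> x\<bar> \<le> \<delta> * exp (c * (L - x))" by simp
  qed
qed

lemma pderiv_sum': "pderiv (sum f A) = (\<Sum>x\<in>A. pderiv (f x))"
  using higher_pderiv_sum[of 1 f A] by simp

lemma antideriv_ex: "\<exists>A. pderiv A = (Q::real poly)"
proof
  show "pderiv (\<Sum>i\<le>degree Q. monom (coeff Q i / real (Suc i)) (Suc i)) = Q"
    by (simp add: pderiv_sum' pderiv_monom poly_as_sum_of_monoms del: of_nat_Suc)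
qed

lemma ode_bound:
  fixes u u' :: "real \<Rightarrow> real"
  assumes c: "c > 0"
    and d: "\<And>x. x \<le> L \<Longrightarrow> (u has_real_derivative u' x) (at x within {..L})"
    and u0: "u L = 0"
    and bd: "\<And>x. x \<le> L \<Longrightarrow> \<bar>u' x\<bar> \<le> M * exp (c*(L-x))"
    and x: "x \<le> L"
  shows "\<bar>u x\<bar> \<le> M/c * exp (c*(L-x))"
proof (cases "x = L")
  case True
  have "0 \<le> M" using bd[of L] by simp
  then show ?thesis using True u0 c by simp
next
  case False
  then have xL: "x < L" using x by simp
  have M0: "0 \<le> M" using bd[of L] by simp
  define E where "E y = M/c * exp (c*(L-y))" for y
  have dE: "(E has_real_derivative (- M * exp (c*(L-y)))) (at y within {x..L})" for y
  proof -
    have "((\<lambda>y. M/c * exp (c*(L-y))) has_real_derivative M/c * (exp (c*(L-y)) * (c * (0 - 1)))) (at y within {x..L})"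
      by ((rule derivative_eq_intros refl)+) (simp add: algebra_simps)
    then show ?thesis using c unfolding E_def by simp
  qed
  have du: "(u has_real_derivative u' y) (at y within {x..L})" if "x \<le> y" "y \<le> L" for y
  proof -
    have "(u has_real_derivative u' y) (at y within {..L})" using d that by simp
    then show ?thesis by (rule has_field_derivative_subset) auto
  qed
  obtain \<xi> where \<xi>: "\<xi> \<in> {x<..<L}"
     "(\<lambda>y. u y - E y) L - (\<lambda>y. u y - E y) x = (\<lambda>h. (u' \<xi> + M * exp (c*(L-\<xi>))) * h) (L - x)"
  proof -
    have "\<exists>\<xi>\<in>{x<..<L}. (\<lambda>y. u y - E y) L - (\<lambda>y. u y - E y) x = (\<lambda>h. (u' \<xi> + M * exp (c*(L-\<xi>))) * h) (L - x)"
    proof (rule mvt_simple[OF xL])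
      fix y assume "x \<le> y" "y \<le> L"
      have "((\<lambda>y. u y - E y) has_real_derivative (u' y - (- M * exp (c*(L-y))))) (at y within {x..L})"
        using du[OF \<open>x \<le> y\<close> \<open>y \<le> L\<close>] dE[of y] by (rule DERIV_diff)
      then show "((\<lambda>y. u y - E y) has_derivative (\<lambda>h. (u' y + M * exp (c*(L-y))) * h)) (at y within {x..L})"
        by (simp add: has_field_derivative_def)
    qed
    then show ?thesis using that by blast
  qed
  have "u' \<xi> + M * exp (c*(L-\<xi>)) \<ge> 0" using bd[of \<xi>] \<xi>(1) by auto
  then have p1: "(u' \<xi> + M * exp (c*(L-\<xi>))) * (L - x) \<ge> 0" using xL by simp
  have eq1: "u L - E L - (u x - E x) = (u' \<xi> + M * exp (c*(L-\<xi>))) * (L - x)" using \<xi>(2) by simp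
  have EL: "E L = M/c" by (simp add: E_def)
  have "M/c \<ge> 0" using M0 c by simp
  then have up: "u x \<le> E x" using p1 eq1 EL u0 by linarith
  obtain \<eta> where \<eta>: "\<eta> \<in> {x<..<L}"
     "(\<lambda>y. u y + E y) L - (\<lambda>y. u y + E y) x = (\<lambda>h. (u' \<eta> - M * exp (c*(L-\<eta>))) * h) (L - x)"
  proof -
    have "\<exists>\<eta>\<in>{x<..<L}. (\<lambda>y. u y + E y) L - (\<lambda>y. u y + E y) x = (\<lambda>h. (u' \<eta> - M * exp (c*(L-\<eta>))) * h) (L - x)"
    proof (rule mvt_simple[OF xL])
      fix y assume "x \<le> y" "y \<le> L"
      have "((\<lambda>y. u y + E y) has_real_derivative (u' y + (- M * exp (c*(L-y))))) (at y within {x..L})"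
        using du[OF \<open>x \<le> y\<close> \<open>y \<le> L\<close>] dE[of y] by (rule DERIV_add)
      then show "((\<lambda>y. u y + E y) has_derivative (\<lambda>h. (u' y - M * exp (c*(L-y))) * h)) (at y within {x..L})"
        by (simp add: has_field_derivative_def)
    qed
    then show ?thesis using that by blast
  qed
  have "u' \<eta> - M * exp (c*(L-\<eta>)) \<le> 0" using bd[of \<eta>] \<eta>(1) by auto
  then have p2: "(u' \<eta> - M * exp (c*(L-\<eta>))) * (L - x) \<le> 0" using xL by (simp add: mult_nonpos_nonneg)
  have eq2: "u L + E L - (u x + E x) = (u' \<eta> - M * exp (c*(L-\<eta>))) * (L - x)" using \<eta>(2) by simp
  have lo: "- E x \<le> u x" using p2 eq2 EL u0 \<open>M/c \<ge> 0\<close> by linarith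
  have "\<bar>u x\<bar> \<le> E x" using up lo by linarith
  then show ?thesis by (simp add: E_def)
qed

lemma approx_one:
  fixes b L :: real and h h1 h2 :: "real \<Rightarrow> real"
  assumes b: "b > 0"
    and h_d1: "\<And>x. x \<le> L \<Longrightarrow> (h has_real_derivative h1 x) (at x within {..L})"
    and h_d2: "\<And>x. x \<le> L \<Longrightarrow> (h1 has_real_derivative h2 x) (at x within {..L})"
    and h2_cont: "continuous_on {..L} h2"
    and h2_pb: "poly_bounded_on {..L} h2"
    and d: "\<delta> > 0"
  shows "\<exists>p. poly p L = h L \<and> poly (pderiv p) L = h1 L \<and> poly (pderiv (pderiv p)) L = h2 L \<and>
     (\<forall>x\<le>L. \<bar>(poly p x - b^2 * poly (pderiv (pderiv p)) x) - (h x - b^2 * h2 x)\<bar>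
              \<le> \<delta> * exp ((1/(4*b))*(L-x)))"
proof -
  define c where "c = 1/(4*b)"
  have c: "c > 0" using b by (simp add: c_def)
  obtain P where P: "\<forall>x\<in>{..L}. \<bar>h2 x\<bar> \<le> poly P x" using h2_pb unfolding poly_bounded_on_def by blast
  obtain C where C: "C > 0" "\<forall>x\<le>L. \<bar>poly P x\<bar> \<le> C * exp (c/8*(L-x))"
    using poly_exp_bound[where \<rho>="c/8" and Q=P and L=L] c by auto
  have "wapprox c L h2"
  proof (rule wapprox_cont[OF c h2_cont])
    fix x assume "x \<le> L"
    then show "\<bar>h2 x\<bar> \<le> C * exp (c/8*(L-x))" using P C by force
  qed
  define K0 where "K0 = 1/c^2 + b^2"
  have K0: "K0 > 0" using c by (simp add: K0_def add_pos_nonneg)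
  define \<epsilon> where "\<epsilon> = \<delta> / K0"
  have e: "\<epsilon> > 0" using d K0 by (simp add: \<epsilon>_def)
  obtain R where R: "\<forall>x\<le>L. \<bar>h2 x - poly R x\<bar> \<le> \<epsilon>/2 * exp (c*(L-x))"
    using \<open>wapprox c L h2\<close> e unfolding wapprox_def by (meson half_gt_zero)
  define R' where "R' = R + [:h2 L - poly R L:]"
  have R'L: "poly R' L = h2 L" by (simp add: R'_def)
  have R': "\<bar>poly R' x - h2 x\<bar> \<le> \<epsilon> * exp (c*(L-x))" if x: "x \<le> L" for x
  proof -
    have 1: "\<bar>h2 x - poly R x\<bar> \<le> \<epsilon>/2 * exp (c*(L-x))" using R x by auto
    have "\<bar>h2 L - poly R L\<bar> \<le> \<epsilon>/2" using R by auto
    also have "\<dots> \<le> \<epsilon>/2 * exp (c*(L-x))" using x c e by simp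
    finally have 2: "\<bar>h2 L - poly R L\<bar> \<le> \<epsilon>/2 * exp (c*(L-x))" .
    have "\<bar>poly R' x - h2 x\<bar> = \<bar>(h2 L - poly R L) - (h2 x - poly R x)\<bar>" by (simp add: R'_def)
    also have "\<dots> \<le> \<epsilon>/2 * exp (c*(L-x)) + \<epsilon>/2 * exp (c*(L-x))"
    proof -
      have "\<bar>-(h2 x - poly R x)\<bar> \<le> \<epsilon>/2 * exp (c*(L-x))" using 1 by (simp only: abs_minus_cancel)
      from abs_add_le2[OF 2 this] show ?thesis by simp
    qed
    finally show ?thesis by simp
  qed
  obtain A1 where A1: "pderiv A1 = R'" using antideriv_ex by blast
  obtain A2 where A2: "pderiv A2 = A1" using antideriv_ex by blast
  define \<beta> where "\<beta> = h1 L - poly A1 L"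
  define \<alpha> where "\<alpha> = h L - poly A2 L - \<beta> * L"
  define p where "p = A2 + [:\<alpha>, \<beta>:]"
  have dp: "pderiv p = A1 + [:\<beta>:]" by (simp add: p_def pderiv_add A2 pderiv_pCons)
  have ddp: "pderiv (pderiv p) = R'" by (simp add: dp pderiv_add A1 pderiv_pCons)
  have pL: "poly p L = h L" by (simp add: p_def \<alpha>_def algebra_simps)
  have dpL: "poly (pderiv p) L = h1 L" by (simp add: dp \<beta>_def)
  have e1: "\<bar>poly (pderiv p) x - h1 x\<bar> \<le> \<epsilon>/c * exp (c*(L-x))" if x: "x \<le> L" for x
  proof (rule ode_bound[OF c _ _ _ x])
    fix y assume y: "y \<le> L"
    have "((\<lambda>x. poly (pderiv p) x) has_real_derivative poly (pderiv (pderiv p)) y) (at y within {..L})"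
      by (rule has_field_derivative_at_within) simp
    then show "((\<lambda>x. poly (pderiv p) x - h1 x) has_real_derivative (poly (pderiv (pderiv p)) y - h2 y)) (at y within {..L})"
      using h_d2[OF y] by (rule DERIV_diff)
    show "\<bar>poly (pderiv (pderiv p)) y - h2 y\<bar> \<le> \<epsilon> * exp (c*(L-y))" using R'[OF y] by (simp add: ddp)
  qed (simp add: dpL)
  have e0: "\<bar>poly p x - h x\<bar> \<le> \<epsilon>/c/c * exp (c*(L-x))" if x: "x \<le> L" for x
  proof (rule ode_bound[OF c _ _ _ x])
    fix y assume y: "y \<le> L"
    have "((\<lambda>x. poly p x) has_real_derivative poly (pderiv p) y) (at y within {..L})"
      by (rule has_field_derivative_at_within) simp
    then show "((\<lambda>x. poly p x - h x) has_real_derivative (poly (pderiv p) y - h1 y)) (at y within {..L})"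
      using h_d1[OF y] by (rule DERIV_diff)
    show "\<bar>poly (pderiv p) y - h1 y\<bar> \<le> \<epsilon>/c * exp (c*(L-y))" using e1[OF y] .
  qed (simp add: pL)
  show ?thesis
  proof (intro exI[of _ p] conjI allI impI)
    show "poly p L = h L" by (rule pL)
    show "poly (pderiv p) L = h1 L" by (rule dpL)
    show "poly (pderiv (pderiv p)) L = h2 L" by (simp add: ddp R'L)
    fix x assume x: "x \<le> L"
    have a: "\<bar>poly p x - h x\<bar> \<le> \<epsilon>/c/c * exp (c*(L-x))" by (rule e0[OF x])
    have "\<bar>- (b^2 * (poly R' x - h2 x))\<bar> = b^2 * \<bar>poly R' x - h2 x\<bar>" by (simp add: abs_mult)
    also have "\<dots> \<le> b^2 * (\<epsilon> * exp (c*(L-x)))" using R'[OF x] by (intro mult_left_mono) auto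
    finally have bb: "\<bar>- (b^2 * (poly R' x - h2 x))\<bar> \<le> b^2 * (\<epsilon> * exp (c*(L-x)))" .
    have "\<bar>(poly p x - b^2 * poly (pderiv (pderiv p)) x) - (h x - b^2 * h2 x)\<bar>
        = \<bar>(poly p x - h x) + - (b^2 * (poly R' x - h2 x))\<bar>" by (simp add: ddp algebra_simps)
    also have "\<dots> \<le> \<epsilon>/c/c * exp (c*(L-x)) + b^2 * (\<epsilon> * exp (c*(L-x)))"
      by (rule abs_add_le2[OF a bb])
    also have "\<dots> = \<epsilon> * K0 * exp (c*(L-x))" by (simp add: K0_def field_simps power2_eq_square)
    also have "\<dots> = \<delta> * exp (c*(L-x))" using K0 by (simp add: \<epsilon>_def)
    finally show "\<bar>(poly p x - b^2 * poly (pderiv (pderiv p)) x) - (h x - b^2 * h2 x)\<bar>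
              \<le> \<delta> * exp ((1/(4*b))*(L-x))" by (simp add: c_def)
  qed
qed




lemma deriv_cont_on:
  assumes "\<And>x. x \<in> S \<Longrightarrow> (f has_real_derivative f' x) (at x within S)"
  shows "continuous_on S f"
  unfolding continuous_on_eq_continuous_within using assms DERIV_continuous by blast

lemma cont_max_comp:
  fixes f :: "real \<Rightarrow> real"
  assumes "continuous_on {L..} f" "a \<ge> 0"
  shows "continuous_on UNIV (\<lambda>x. f (max x L + a))"
  by (rule continuous_on_compose2[OF assms(1)]) (use assms(2) in \<open>auto intro!: continuous_intros\<close>)

lemma cont_min_comp:
  fixes f :: "real \<Rightarrow> real"
  assumes "continuous_on {..L} f"
  shows "continuous_on UNIV (\<lambda>x. f (min x L))"
  by (rule continuous_on_compose2[OF assms]) (auto intro!: continuous_intros)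

lemma G_meas:
  fixes f f1 f2 H :: "real \<Rightarrow> real"
  assumes f_d1: "\<And>x. x \<ge> L \<Longrightarrow> (f has_real_derivative f1 x) (at x within {L..})"
    and f_d2: "\<And>x. x \<ge> L \<Longrightarrow> (f1 has_real_derivative f2 x) (at x within {L..})"
    and H: "continuous_on {..L} H"
  shows "(\<lambda>x. if x \<ge> L then f x - b^2 * f2 x else H x) \<in> borel_measurable borel"
proof -
  have cf: "continuous_on {L..} f" by (rule deriv_cont_on[of _ _ f1]) (use f_d1 in auto)
  have cf1: "continuous_on {L..} f1" by (rule deriv_cont_on[of _ _ f2]) (use f_d2 in auto)
  define F where "F n x = (f1 (max x L + 1/Suc n) - f1 (max x L + 0)) * Suc n" for n x
  define Gn where "Gn n x = (if x \<ge> L then f (max x L + 0) - b^2 * F n x else H (min x L))" for n x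
  have conv: "(\<lambda>n. F n x) \<longlonglongrightarrow> f2 x" if x: "x \<ge> L" for x
  proof -
    have "((\<lambda>y. (f1 y - f1 x) / (y - x)) \<longlongrightarrow> f2 x) (at x within {L..})"
      using f_d2[OF x] by (simp add: has_field_derivative_iff)
    moreover have "filterlim (\<lambda>n. x + 1/Suc n) (at x within {L..}) sequentially"
      unfolding filterlim_at
    proof
      show "\<forall>\<^sub>F n in sequentially. x + 1/Suc n \<in> {L..} \<and> x + 1/Suc n \<noteq> x"
        using x by (auto intro!: always_eventually simp: add_increasing2)
      have "(\<lambda>n. x + 1 / real (Suc n)) \<longlonglongrightarrow> x + 0"
        by (intro tendsto_add tendsto_const LIMSEQ_inverse_real_of_nat[unfolded inverse_eq_divide])
      then show "(\<lambda>n. x + 1 / real (Suc n)) \<longlonglongrightarrow> x" by simp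
    qed
    ultimately have "(\<lambda>n. (f1 (x + 1/Suc n) - f1 x) / ((x + 1/Suc n) - x)) \<longlonglongrightarrow> f2 x"
      by (rule filterlim_compose)
    moreover have "(f1 (x + 1/Suc n) - f1 x) / ((x + 1/Suc n) - x) = F n x" for n
      using x by (simp add: F_def max_def)
    ultimately show ?thesis by simp
  qed
  have "(\<lambda>x. if x \<ge> L then f x - b^2 * f2 x else H x) \<in> borel_measurable borel"
  proof (rule borel_measurable_LIMSEQ_real[where u=Gn])
    fix x :: real
    show "(\<lambda>n. Gn n x) \<longlonglongrightarrow> (if x \<ge> L then f x - b^2 * f2 x else H x)"
    proof (cases "x \<ge> L")
      case True
      then show ?thesis unfolding Gn_def using conv[OF True]
        by (simp add: max_def) (intro tendsto_intros)
    next
      case False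
      then show ?thesis by (simp add: Gn_def min_def)
    qed
  next
    fix n
    have c1: "continuous_on UNIV (\<lambda>x. f (max x L + 0))" by (rule cont_max_comp[OF cf]) simp
    have c2: "continuous_on UNIV (F n)" unfolding F_def
      using cont_max_comp[OF cf1, of "1/Suc n"] cont_max_comp[OF cf1, of 0]
      by (intro continuous_intros) auto
    have c3: "continuous_on UNIV (\<lambda>x. H (min x L))" by (rule cont_min_comp[OF H])
    have m1: "(\<lambda>x. f (max x L + 0)) \<in> borel_measurable borel" by (rule borel_measurable_continuous_onI[OF c1])
    have m2: "F n \<in> borel_measurable borel" by (rule borel_measurable_continuous_onI[OF c2])
    have m3: "(\<lambda>x. H (min x L)) \<in> borel_measurable borel" by (rule borel_measurable_continuous_onI[OF c3])
    show "Gn n \<in> borel_measurable borel" unfolding Gn_def using m1 m2 m3 by measurable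
  qed
  then show ?thesis .
qed

lemma f_meas:
  fixes f f1 :: "real \<Rightarrow> real"
  assumes f_d1: "\<And>x. x \<ge> L \<Longrightarrow> (f has_real_derivative f1 x) (at x within {L..})"
  shows "(\<lambda>x. f (max x L)) \<in> borel_measurable borel"
proof -
  have cf: "continuous_on {L..} f" by (rule deriv_cont_on[of _ _ f1]) (use f_d1 in auto)
  have "continuous_on UNIV (\<lambda>x. f (max x L + 0))" by (rule cont_max_comp[OF cf]) simp
  from borel_measurable_continuous_onI[OF this] show ?thesis by simp
qed

lemma exp_half_line:
  fixes a L :: real
  assumes a: "a > 0"
  shows "(\<integral>\<^sup>+x. ennreal (exp (a*(x - L))) * indicator {..<L} x \<partial>lborel) \<le> ennreal (1/a)"
proof -
  define g where "g x = ennreal (exp (a*(x - L))) * indicator {..<L} x" for x :: real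
  have gm: "g \<in> borel_measurable borel" unfolding g_def by measurable
  have "(\<integral>\<^sup>+x. g x \<partial>lborel) = (\<integral>\<^sup>+x. g x \<partial>(distr lborel borel uminus))"
    by (simp add: lborel_distr_uminus)
  also have "\<dots> = (\<integral>\<^sup>+y. g (- y) \<partial>lborel)"
    by (rule nn_integral_distr) (use gm in auto)
  also have "\<dots> \<le> (\<integral>\<^sup>+y. ennreal (exp (- a*y - a*L)) * indicator {-L..} y \<partial>lborel)"
    by (intro nn_integral_mono) (auto simp: g_def indicator_def algebra_simps)
  also have "\<dots> = ennreal (0 - (- exp (- a*(-L) - a*L) / a))"
  proof (rule nn_integral_FTC_atLeast)
    show "(\<lambda>y. exp (- a*y - a*L)) \<in> borel_measurable borel" by measurable
    show "((\<lambda>y. - exp (- a*y - a*L) / a) has_real_derivative exp (- a*y - a*L)) (at y)" for y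
      using a by (auto intro!: derivative_eq_intros)
    show "((\<lambda>y. - exp (- a*y - a*L) / a) \<longlongrightarrow> 0) at_top" using a by real_asymp
  qed auto
  also have "\<dots> = ennreal (1/a)" by simp
  finally show ?thesis unfolding g_def .
qed

lemma sq_ineq:
  fixes u v \<epsilon> W :: real
  assumes e: "0 < \<epsilon>" "\<epsilon> \<le> 1" and v: "\<bar>v\<bar> \<le> \<epsilon> * W"
  shows "(u + v)^2 \<le> (1+\<epsilon>) * u^2 + 2*\<epsilon>*W^2"
proof -
  have "0 \<le> \<epsilon> * W" using v abs_ge_zero order_trans by blast
  then have W: "0 \<le> W" using e by (simp add: zero_le_mult_iff)
  have 1: "\<epsilon> * (u + v)^2 \<le> \<epsilon> * (1 + \<epsilon>) * u^2 + (1 + \<epsilon>) * v^2"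
  proof -
    have "0 \<le> (\<epsilon> * u - v)^2" by simp
    then show ?thesis by (simp add: power2_eq_square algebra_simps)
  qed
  have "v^2 \<le> (\<epsilon> * W)^2" using v by (metis abs_ge_zero power2_abs power_mono)
  then have "(1 + \<epsilon>) * v^2 \<le> (1+\<epsilon>)*(\<epsilon> * W)^2" using e by (intro mult_left_mono) auto
  also have "\<dots> \<le> 2*(\<epsilon> * W)^2" using e by (intro mult_right_mono) auto
  finally have "\<epsilon> * (u + v)^2 \<le> \<epsilon> * ((1 + \<epsilon>) * u^2 + 2 * \<epsilon> * W^2)" using 1 by (simp add: algebra_simps power2_eq_square)
  then show ?thesis using e by simp
qed

lemma joint_meas:
  fixes G f :: "real \<Rightarrow> real"
  assumes mu_sets: "sets \<mu> = sets borel"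
    and fm: "(\<lambda>x. f (max x L)) \<in> borel_measurable borel"
    and Gm: "G \<in> borel_measurable borel"
  shows "(\<lambda>(x,q). ennreal ((G x - f q)^2 * (1 / (2*b)) * exp (- \<bar>x - q\<bar> / b)) * indicator {L..} q)
          \<in> borel_measurable (lborel \<Otimes>\<^sub>M \<mu>)"
proof -
  have eq: "(\<lambda>(x,q). ennreal ((G x - f q)^2 * (1 / (2*b)) * exp (- \<bar>x - q\<bar> / b)) * indicator {L..} q)
      = (\<lambda>(x,q). ennreal ((G x - f (max q L))^2 * (1 / (2*b)) * exp (- \<bar>x - q\<bar> / b)) * indicator {L..} q)"
    by (auto simp: fun_eq_iff indicator_def max_def)
  have "(\<lambda>(x,q). ennreal ((G x - f (max q L))^2 * (1 / (2*b)) * exp (- \<bar>x - q\<bar> / b)) * indicator {L..} q)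
          \<in> borel_measurable (borel \<Otimes>\<^sub>M borel)"
    using fm Gm by measurable
  moreover have S: "sets (lborel \<Otimes>\<^sub>M \<mu>) = sets (borel \<Otimes>\<^sub>M borel)"
    by (rule sets_pair_measure_cong) (auto simp: mu_sets)
  ultimately show ?thesis unfolding eq using measurable_cong_sets[OF S refl] by blast
qed

lemma loss_ineq:
  fixes b L \<epsilon> :: real and f G1 G2 :: "real \<Rightarrow> real" and \<mu> :: "real measure"
  assumes b: "b > 0" and mu_prob: "prob_space \<mu>" and mu_sets: "sets \<mu> = sets borel"
    and fm: "(\<lambda>x. f (max x L)) \<in> borel_measurable borel"
    and G1m: "G1 \<in> borel_measurable borel" and G2m: "G2 \<in> borel_measurable borel"
    and eqR: "\<And>x. x \<ge> L \<Longrightarrow> G1 x = G2 x"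
    and bdL: "\<And>x. x < L \<Longrightarrow> \<bar>G1 x - G2 x\<bar> \<le> \<epsilon> * exp ((1/(4*b))*(L-x))"
    and e: "0 < \<epsilon>" "\<epsilon> \<le> 1"
  shows "kernel_loss \<mu> L b f G1 \<le> ennreal (1+\<epsilon>) * kernel_loss \<mu> L b f G2 + ennreal (2*\<epsilon>)"
proof -
  interpret prob_space \<mu> by (rule mu_prob)
  define \<Phi> where "\<Phi> G x q = ennreal ((G x - f q)^2 * (1 / (2*b)) * exp (- \<bar>x - q\<bar> / b)) * indicator {L..} q"
    for G :: "real \<Rightarrow> real" and x q
  define D where "D x = (if x < L then 2*\<epsilon>*(exp ((1/(4*b))*(L-x)))^2 else 0)" for x
  define E where "E x = (if x < L then \<epsilon>/b * exp ((1/(2*b))*(x-L)) else 0)" for x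
  define \<Psi> where "\<Psi> x q = ennreal (D x * (1 / (2*b)) * exp (- \<bar>x - q\<bar> / b)) * indicator {L..} q" for x q
  have D0: "0 \<le> D x" for x using e by (simp add: D_def)
  have kpos: "0 \<le> (1 / (2*b)) * exp (- \<bar>x - q\<bar> / b)" for x q using b by simp
  have pt: "\<Phi> G1 x q \<le> ennreal (1+\<epsilon>) * \<Phi> G2 x q + \<Psi> x q" for x q
  proof (cases "q \<ge> L")
    case False then show ?thesis by (simp add: \<Phi>_def \<Psi>_def)
  next
    case True
    have r: "(G1 x - f q)^2 \<le> (1+\<epsilon>) * (G2 x - f q)^2 + D x"
    proof (cases "x < L")
      case True
      have "(G1 x - f q)^2 = ((G2 x - f q) + (G1 x - G2 x))^2" by simp
      also have "\<dots> \<le> (1+\<epsilon>) * (G2 x - f q)^2 + 2*\<epsilon>*(exp ((1/(4*b))*(L-x)))^2"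
        by (rule sq_ineq[OF e bdL[OF True]])
      finally show ?thesis using True by (simp add: D_def)
    next
      case False
      then have "G1 x = G2 x" using eqR by simp
      moreover have "0 \<le> \<epsilon> * (G2 x - f q)^2" using e by simp
      ultimately show ?thesis using False by (simp add: D_def algebra_simps)
    qed
    define k where "k = (1 / (2*b)) * exp (- \<bar>x - q\<bar> / b)"
    have k: "0 \<le> k" using kpos by (simp add: k_def)
    have "(G1 x - f q)^2 * k \<le> ((1+\<epsilon>) * (G2 x - f q)^2 + D x) * k"
      using r k by (rule mult_right_mono)
    then have "ennreal ((G1 x - f q)^2 * k) \<le> ennreal ((1+\<epsilon>) * ((G2 x - f q)^2 * k) + D x * k)"
      by (intro ennreal_leI) (simp add: algebra_simps)
    also have "\<dots> = ennreal (1+\<epsilon>) * ennreal ((G2 x - f q)^2 * k) + ennreal (D x * k)"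
      using e k D0[of x] by (subst ennreal_plus) (auto simp: ennreal_mult)
    finally show ?thesis using True by (simp add: \<Phi>_def \<Psi>_def k_def mult.assoc)
  qed
  have \<Phi>m: "(\<lambda>(x,q). \<Phi> G x q) \<in> borel_measurable (lborel \<Otimes>\<^sub>M \<mu>)" if "G \<in> borel_measurable borel" for G
    unfolding \<Phi>_def by (rule joint_meas[OF mu_sets fm that])
  have \<Phi>mq: "\<Phi> G x \<in> borel_measurable \<mu>" if "G \<in> borel_measurable borel" for G x
    using measurable_Pair2[OF \<Phi>m[OF that], of x] by simp
  have \<Psi>mq: "\<Psi> x \<in> borel_measurable \<mu>" for x
  proof -
    have "(\<lambda>q. \<Psi> x q) \<in> borel_measurable borel" unfolding \<Psi>_def by measurable
    then show ?thesis using measurable_cong_sets[OF mu_sets refl] by blast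
  qed
  have inner: "(\<integral>\<^sup>+q. \<Phi> G1 x q \<partial>\<mu>) \<le> ennreal (1+\<epsilon>) * (\<integral>\<^sup>+q. \<Phi> G2 x q \<partial>\<mu>) + ennreal (E x)" for x
  proof -
    have "(\<integral>\<^sup>+q. \<Phi> G1 x q \<partial>\<mu>) \<le> (\<integral>\<^sup>+q. ennreal (1+\<epsilon>) * \<Phi> G2 x q + \<Psi> x q \<partial>\<mu>)"
      by (rule nn_integral_mono) (rule pt)
    also have "\<dots> = (\<integral>\<^sup>+q. ennreal (1+\<epsilon>) * \<Phi> G2 x q \<partial>\<mu>) + (\<integral>\<^sup>+q. \<Psi> x q \<partial>\<mu>)"
      by (rule nn_integral_add) (use \<Phi>mq[OF G2m] \<Psi>mq in auto)
    also have "(\<integral>\<^sup>+q. ennreal (1+\<epsilon>) * \<Phi> G2 x q \<partial>\<mu>) = ennreal (1+\<epsilon>) * (\<integral>\<^sup>+q. \<Phi> G2 x q \<partial>\<mu>)"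
      by (rule nn_integral_cmult) (rule \<Phi>mq[OF G2m])
    also have "(\<integral>\<^sup>+q. \<Psi> x q \<partial>\<mu>) \<le> ennreal (E x)"
    proof -
      have "(\<integral>\<^sup>+q. \<Psi> x q \<partial>\<mu>) \<le> (\<integral>\<^sup>+q. ennreal (E x) * indicator {L..} q \<partial>\<mu>)"
      proof (rule nn_integral_mono)
        fix q
        show "\<Psi> x q \<le> ennreal (E x) * indicator {L..} q"
        proof (cases "q \<ge> L \<and> x < L")
          case True
          then have "\<bar>x - q\<bar> = q - x" by simp
          then have "exp (- \<bar>x - q\<bar> / b) \<le> exp ((x - L)/b)" using True b by (simp add: divide_right_mono)
          then have "D x * (1 / (2*b)) * exp (- \<bar>x - q\<bar> / b) \<le> D x * (1 / (2*b)) * exp ((x - L)/b)"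
            using D0[of x] b by (intro mult_left_mono) auto
          also have "\<dots> = E x"
          proof -
            have "(exp ((1/(4*b))*(L-x)))^2 * exp ((x - L)/b) = exp ((1/(2*b))*(x-L))"
              unfolding power2_eq_square exp_add[symmetric] using b by (simp add: field_simps)
            then show ?thesis using True b by (simp add: D_def E_def field_simps)
          qed
          finally show ?thesis using True by (simp add: \<Psi>_def ennreal_leI)
        next
          case False
          then show ?thesis by (auto simp: \<Psi>_def D_def indicator_def)
        qed
      qed
      also have "\<dots> = ennreal (E x) * emeasure \<mu> {L..}"
        by (rule nn_integral_cmult_indicator) (simp add: mu_sets)
      also have "\<dots> \<le> ennreal (E x) * 1"
        by (intro mult_left_mono) (auto simp: emeasure_space_1[symmetric] intro!: emeasure_mono simp: mu_sets sets_eq_imp_space_eq[OF mu_sets])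
      finally show ?thesis by simp
    qed
    finally show ?thesis by (simp add: add_left_mono)
  qed
  have "kernel_loss \<mu> L b f G1 = (\<integral>\<^sup>+x. (\<integral>\<^sup>+q. \<Phi> G1 x q \<partial>\<mu>) \<partial>lborel)"
    by (simp add: kernel_loss_def \<Phi>_def)
  also have "\<dots> \<le> (\<integral>\<^sup>+x. ennreal (1+\<epsilon>) * (\<integral>\<^sup>+q. \<Phi> G2 x q \<partial>\<mu>) + ennreal (E x) \<partial>lborel)"
    by (rule nn_integral_mono) (rule inner)
  also have "\<dots> = (\<integral>\<^sup>+x. ennreal (1+\<epsilon>) * (\<integral>\<^sup>+q. \<Phi> G2 x q \<partial>\<mu>) \<partial>lborel) + (\<integral>\<^sup>+x. ennreal (E x) \<partial>lborel)"
  proof (rule nn_integral_add)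
    have "(\<lambda>x. \<integral>\<^sup>+q. \<Phi> G2 x q \<partial>\<mu>) \<in> borel_measurable lborel"
      using borel_measurable_nn_integral[OF \<Phi>m[OF G2m]] by simp
    then show "(\<lambda>x. ennreal (1+\<epsilon>) * (\<integral>\<^sup>+q. \<Phi> G2 x q \<partial>\<mu>)) \<in> borel_measurable lborel" by measurable
    show "(\<lambda>x. ennreal (E x)) \<in> borel_measurable lborel" unfolding E_def by measurable
  qed
  also have "(\<integral>\<^sup>+x. ennreal (1+\<epsilon>) * (\<integral>\<^sup>+q. \<Phi> G2 x q \<partial>\<mu>) \<partial>lborel) = ennreal (1+\<epsilon>) * kernel_loss \<mu> L b f G2"
  proof -
    have "(\<lambda>x. \<integral>\<^sup>+q. \<Phi> G2 x q \<partial>\<mu>) \<in> borel_measurable lborel"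
      using borel_measurable_nn_integral[OF \<Phi>m[OF G2m]] by simp
    then show ?thesis by (simp add: nn_integral_cmult kernel_loss_def \<Phi>_def)
  qed
  also have "(\<integral>\<^sup>+x. ennreal (E x) \<partial>lborel) \<le> ennreal (2*\<epsilon>)"
  proof -
    have "(\<integral>\<^sup>+x. ennreal (E x) \<partial>lborel) = (\<integral>\<^sup>+x. ennreal (\<epsilon>/b) * (ennreal (exp ((1/(2*b))*(x-L))) * indicator {..<L} x) \<partial>lborel)"
      using e b by (intro nn_integral_cong) (auto simp: E_def ennreal_mult[symmetric] indicator_def)
    also have "\<dots> = ennreal (\<epsilon>/b) * (\<integral>\<^sup>+x. ennreal (exp ((1/(2*b))*(x-L))) * indicator {..<L} x \<partial>lborel)"
      by (rule nn_integral_cmult) measurable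
    also have "\<dots> \<le> ennreal (\<epsilon>/b) * ennreal (1/(1/(2*b)))"
      using b by (intro mult_left_mono exp_half_line) auto
    also have "\<dots> = ennreal (2*\<epsilon>)" using b e by (simp add: ennreal_mult[symmetric])
    finally show ?thesis .
  qed
  finally show ?thesis by (simp add: add_left_mono)
qed

lemma ennreal_sandwich:
  fixes a :: ennreal and s :: "nat \<Rightarrow> ennreal" and \<epsilon> :: "nat \<Rightarrow> real"
  assumes e0: "\<epsilon> \<longlonglongrightarrow> 0" and ep: "\<And>K. 0 < \<epsilon> K"
    and up: "\<And>K. a \<le> ennreal (1 + \<epsilon> K) * s K + ennreal (2 * \<epsilon> K)"
    and lo: "\<And>K. s K \<le> ennreal (1 + \<epsilon> K) * a + ennreal (2 * \<epsilon> K)"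
  shows "s \<longlonglongrightarrow> a"
proof (cases "a = \<top>")
  case True
  have "s K = \<top>" for K
  proof (rule ccontr)
    assume "s K \<noteq> \<top>"
    then have "ennreal (1 + \<epsilon> K) * s K + ennreal (2 * \<epsilon> K) < \<top>"
      by (simp add: ennreal_mult_less_top less_top)
    then show False using up[of K] True by (simp add: top_unique)
  qed
  then have "s = (\<lambda>K. \<top>)" by auto
  then show ?thesis using True by simp
next
  case False
  define r where "r = enn2real a"
  have ar: "a = ennreal r" "0 \<le> r" using False by (auto simp: r_def ennreal_enn2real_if)
  have sfin: "s K \<noteq> \<top>" for K
  proof -
    have "ennreal (1 + \<epsilon> K) * a + ennreal (2 * \<epsilon> K) < \<top>"
      using False by (simp add: ennreal_mult_less_top less_top)
    then show ?thesis using lo[of K] by (metis neq_top_trans top.not_eq_extremum)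
  qed
  define t where "t K = enn2real (s K)" for K
  have st: "s K = ennreal (t K)" "0 \<le> t K" for K using sfin[of K] by (auto simp: t_def ennreal_enn2real_if)
  have i1: "r \<le> (1 + \<epsilon> K) * t K + 2 * \<epsilon> K" for K
  proof -
    have "ennreal r \<le> ennreal ((1 + \<epsilon> K) * t K + 2 * \<epsilon> K)"
      using up[of K] ep[of K] st[of K] ar
      by (simp add: ennreal_mult[symmetric] ennreal_plus[symmetric] del: ennreal_plus)
    then show ?thesis using ep[of K] st[of K] by (subst (asm) ennreal_le_iff) auto
  qed
  have i2: "t K \<le> (1 + \<epsilon> K) * r + 2 * \<epsilon> K" for K
  proof -
    have "ennreal (t K) \<le> ennreal ((1 + \<epsilon> K) * r + 2 * \<epsilon> K)"
      using lo[of K] ep[of K] st[of K] ar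
      by (simp add: ennreal_mult[symmetric] ennreal_plus[symmetric] del: ennreal_plus)
    then show ?thesis using ep[of K] ar by (subst (asm) ennreal_le_iff) auto
  qed
  have bnd: "\<bar>t K - r\<bar> \<le> \<epsilon> K * (2 * r + 4)" if "\<epsilon> K \<le> 1" for K
  proof -
    have "t K - r \<le> \<epsilon> K * r + 2 * \<epsilon> K" using i2[of K] by (simp add: algebra_simps)
    also have "\<dots> \<le> \<epsilon> K * (2 * r + 4)" using ep[of K] ar by (simp add: algebra_simps)
    finally have A: "t K - r \<le> \<epsilon> K * (2 * r + 4)" .
    have "r - t K \<le> \<epsilon> K * t K + 2 * \<epsilon> K" using i1[of K] by (simp add: algebra_simps)
    also have "\<epsilon> K * t K \<le> \<epsilon> K * ((1 + \<epsilon> K) * r + 2 * \<epsilon> K)"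
      using i2[of K] ep[of K] by (intro mult_left_mono) auto
    also have "\<epsilon> K * ((1 + \<epsilon> K) * r + 2 * \<epsilon> K) \<le> \<epsilon> K * (2 * r + 2)"
      using that ep[of K] ar by (intro mult_left_mono) (auto intro!: add_mono mult_right_mono)
    finally have B: "r - t K \<le> \<epsilon> K * (2 * r + 4)" by (simp add: algebra_simps)
    show ?thesis using A B by linarith
  qed
  have "eventually (\<lambda>K. \<epsilon> K < 1) sequentially"
    using order_tendstoD(2)[OF e0, of 1] by simp
  then have "eventually (\<lambda>K. \<epsilon> K \<le> 1) sequentially"
    by eventually_elim simp
  then have ev: "eventually (\<lambda>K. norm (t K - r) \<le> \<epsilon> K * (2 * r + 4)) sequentially"
    by eventually_elim (use bnd in auto)
  have "(\<lambda>K. \<epsilon> K * (2 * r + 4)) \<longlonglongrightarrow> 0 * (2 * r + 4)" by (rule tendsto_mult[OF e0 tendsto_const])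
  then have "(\<lambda>K. \<epsilon> K * (2 * r + 4)) \<longlonglongrightarrow> 0" by simp
  with ev have "(\<lambda>K. t K - r) \<longlonglongrightarrow> 0" by (rule Lim_null_comparison)
  then have "t \<longlonglongrightarrow> r" using LIM_zero_cancel by blast
  then have "(\<lambda>K. ennreal (t K)) \<longlonglongrightarrow> ennreal r" by (rule tendsto_ennrealI)
  moreover have "s = (\<lambda>K. ennreal (t K))" using st by auto
  ultimately show ?thesis using ar by simp
qed

theorem theorem14:
  fixes b L :: real
    and f f1 f2 :: "real \<Rightarrow> real"
    and \<mu> :: "real measure"
    and h h1 h2 :: "real \<Rightarrow> real"
  assumes b_pos: "b > 0"
    and f_d1: "\<And>x. x \<ge> L \<Longrightarrow> (f has_real_derivative f1 x) (at x within {L..})"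
    and f_d2: "\<And>x. x \<ge> L \<Longrightarrow> (f1 has_real_derivative f2 x) (at x within {L..})"
    and f_tempered: "\<And>s. schwartz s \<Longrightarrow>
          set_integrable lborel {L..} (\<lambda>x. complex_of_real (f x) * s x)"
    and mu_prob: "prob_space \<mu>"
    and mu_sets: "sets \<mu> = sets borel"
    and mu_supp: "measure \<mu> {L..} = 1"
    and mu_int: "set_integrable \<mu> {L..} (\<lambda>q. \<bar>f q\<bar> * exp ((L - q) / b))"
    and h_d1: "\<And>x. x \<le> L \<Longrightarrow> (h has_real_derivative h1 x) (at x within {..L})"
    and h_d2: "\<And>x. x \<le> L \<Longrightarrow> (h1 has_real_derivative h2 x) (at x within {..L})"
    and h2_cont: "continuous_on {..L} h2"
    and h_pb: "poly_bounded_on {..L} h"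
    and h1_pb: "poly_bounded_on {..L} h1"
    and h2_pb: "poly_bounded_on {..L} h2"
    and h_L: "h L = f L" and h1_L: "h1 L = f1 L" and h2_L: "h2 L = f2 L"
  shows "\<exists>p :: nat \<Rightarrow> real poly.
     (\<forall>K. poly (p K) L = f L \<and> poly (pderiv (p K)) L = f1 L
           \<and> poly (pderiv (pderiv (p K))) L = f2 L) \<and>
     ((\<lambda>K. kernel_loss \<mu> L b f
              (\<lambda>x. if x \<ge> L then f x - b^2 * f2 x
                   else poly (p K) x - b^2 * poly (pderiv (pderiv (p K))) x))
       \<longlonglongrightarrow>
      kernel_loss \<mu> L b f
              (\<lambda>x. if x \<ge> L then f x - b^2 * f2 x else h x - b^2 * h2 x))"
proof -
  define c where "c = 1/(4*b)"
  have ex: "\<forall>K. \<exists>p. poly p L = h L \<and> poly (pderiv p) L = h1 L \<and> poly (pderiv (pderiv p)) L = h2 L \<and>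
     (\<forall>x\<le>L. \<bar>(poly p x - b^2 * poly (pderiv (pderiv p)) x) - (h x - b^2 * h2 x)\<bar>
              \<le> (1 / real (Suc K)) * exp ((1/(4*b))*(L-x)))"
  proof
    fix K
    show "\<exists>p. poly p L = h L \<and> poly (pderiv p) L = h1 L \<and> poly (pderiv (pderiv p)) L = h2 L \<and>
     (\<forall>x\<le>L. \<bar>(poly p x - b^2 * poly (pderiv (pderiv p)) x) - (h x - b^2 * h2 x)\<bar>
              \<le> (1 / real (Suc K)) * exp ((1/(4*b))*(L-x)))"
      by (rule approx_one[OF b_pos h_d1 h_d2 h2_cont h2_pb]) auto
  qed
  then obtain p where p: "\<And>K. poly (p K) L = h L \<and> poly (pderiv (p K)) L = h1 L \<and> poly (pderiv (pderiv (p K))) L = h2 L \<and>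
     (\<forall>x\<le>L. \<bar>(poly (p K) x - b^2 * poly (pderiv (pderiv (p K))) x) - (h x - b^2 * h2 x)\<bar>
              \<le> (1 / real (Suc K)) * exp ((1/(4*b))*(L-x)))"
    by metis
  define G where "G = (\<lambda>x. if x \<ge> L then f x - b^2 * f2 x else h x - b^2 * h2 x)"
  define GK where "GK K = (\<lambda>x. if x \<ge> L then f x - b^2 * f2 x
                   else poly (p K) x - b^2 * poly (pderiv (pderiv (p K))) x)" for K
  have fm: "(\<lambda>x. f (max x L)) \<in> borel_measurable borel" by (rule f_meas[OF f_d1])
  have ch: "continuous_on {..L} h" by (rule deriv_cont_on[of _ _ h1]) (use h_d1 in auto)
  have Gm: "G \<in> borel_measurable borel" unfolding G_def
    by (rule G_meas[OF f_d1 f_d2]) (auto intro!: continuous_intros ch h2_cont)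
  have GKm: "GK K \<in> borel_measurable borel" for K unfolding GK_def
    by (rule G_meas[OF f_d1 f_d2]) (auto intro!: continuous_intros)
  define \<epsilon> where "\<epsilon> K = 1 / real (Suc K)" for K
  have ep: "0 < \<epsilon> K" "\<epsilon> K \<le> 1" for K by (auto simp: \<epsilon>_def)
  have e0: "\<epsilon> \<longlonglongrightarrow> 0" unfolding \<epsilon>_def by (rule LIMSEQ_inverse_real_of_nat[unfolded inverse_eq_divide])
  have bd: "\<bar>GK K x - G x\<bar> \<le> \<epsilon> K * exp ((1/(4*b))*(L-x))" if "x < L" for K x
    using p[of K] that by (simp add: GK_def G_def \<epsilon>_def)
  have up: "kernel_loss \<mu> L b f G \<le> ennreal (1 + \<epsilon> K) * kernel_loss \<mu> L b f (GK K) + ennreal (2 * \<epsilon> K)" for K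
  proof (rule loss_ineq[OF b_pos mu_prob mu_sets fm Gm GKm _ _ ep])
    show "G x = GK K x" if "x \<ge> L" for x using that by (simp add: G_def GK_def)
    show "\<bar>G x - GK K x\<bar> \<le> \<epsilon> K * exp ((1/(4*b))*(L-x))" if "x < L" for x
      using bd[OF that, of K] by (simp add: abs_minus_commute)
  qed
  have lo: "kernel_loss \<mu> L b f (GK K) \<le> ennreal (1 + \<epsilon> K) * kernel_loss \<mu> L b f G + ennreal (2 * \<epsilon> K)" for K
  proof (rule loss_ineq[OF b_pos mu_prob mu_sets fm GKm Gm _ _ ep])
    show "GK K x = G x" if "x \<ge> L" for x using that by (simp add: G_def GK_def)
    show "\<bar>GK K x - G x\<bar> \<le> \<epsilon> K * exp ((1/(4*b))*(L-x))" if "x < L" for x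
      using bd[OF that, of K] .
  qed
  have conv: "(\<lambda>K. kernel_loss \<mu> L b f (GK K)) \<longlonglongrightarrow> kernel_loss \<mu> L b f G"
    by (rule ennreal_sandwich[OF e0 ep(1) up lo])
  show ?thesis
  proof (intro exI[of _ p] conjI allI)
    fix K
    show "poly (p K) L = f L" using p[of K] h_L by simp
    show "poly (pderiv (p K)) L = f1 L" using p[of K] h1_L by simp
    show "poly (pderiv (pderiv (p K))) L = f2 L" using p[of K] h2_L by simp
  next
    show "(\<lambda>K. kernel_loss \<mu> L b f
              (\<lambda>x. if x \<ge> L then f x - b^2 * f2 x
                   else poly (p K) x - b^2 * poly (pderiv (pderiv (p K))) x))
       \<longlonglongrightarrow>
      kernel_loss \<mu> L b f
              (\<lambda>x. if x \<ge> L then f x - b^2 * f2 x else h x - b^2 * h2 x)"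
      using conv by (simp add: GK_def G_def)
  qed
qed


end
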